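(* Let $N\ge 2$ and let $K=\{x\in\mathbb{R}^N : x_i^2+x_{i+1}^2\le 1\ \text{for all } 1\le i\le N-1\}$. For every subset $I\subset\{2,\dots,N-2\}$ containing no two consecutive integers, let $$K_I=\{x\in K : x_i^2+x_{i+1}^2=1 \text{ for } i\in\{1,\dots,N-1\}\setminus I,\ \ x_i^2+x_{i+1}^2<1\text{ for } i\in I\}.$$ Then the set of extreme points of $K$ is $\bigcup_I K_I$, the union running over all subsets $I\subset\{2,\dots,N-2\}$ with no two consecutive elements. *)

theory Defs
  imports "HOL-Analysis.Analysis"
begin

text \<open>Points of R^N are vectors x :: real ^ 'n with N = CARD('n); the coordinates
  are labelled 1..N via a bijection idx :: nat => 'n from {1..N} onto UNIV,
  so x_i is x $ idx i.\<close>

definition Kset :: "nat \<Rightarrow> (nat \<Rightarrow> 'n) \<Rightarrow> (real ^ 'n::finite) set" where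
  "Kset N idx = {x. \<forall>i\<in>{1..N-1}. (x $ idx i)^2 + (x $ idx (i+1))^2 \<le> 1}"

definition KIset :: "nat \<Rightarrow> (nat \<Rightarrow> 'n) \<Rightarrow> nat set \<Rightarrow> (real ^ 'n::finite) set" where
  "KIset N idx I = {x \<in> Kset N idx.
      (\<forall>i\<in>{1..N-1} - I. (x $ idx i)^2 + (x $ idx (i+1))^2 = 1) \<and>
      (\<forall>i\<in>I. (x $ idx i)^2 + (x $ idx (i+1))^2 < 1)}"

definition admissible_index_sets :: "nat \<Rightarrow> nat set set" where
  "admissible_index_sets N = {I. I \<subseteq> {2..N-2} \<and> (\<forall>i\<in>I. i+1 \<notin> I)}"

end

theory Submission
  imports Defs
begin

lemma pair_tight:
  fixes pa qa ra sa u :: real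
  assumes "pa^2 + qa^2 \<le> 1" "ra^2 + sa^2 \<le> 1" "0 < u" "u < 1"
    and "((1-u)*pa + u*ra)^2 + ((1-u)*qa + u* sa)^2 = 1"
  shows "pa = ra \<and> qa = sa"
proof -
  have e1: "((1-u)*pa + u*ra)^2 = (1-u)*pa^2 + u*ra^2 - u*(1-u)*(pa-ra)^2"
    by (simp add: power2_eq_square algebra_simps)
  have e2: "((1-u)*qa + u* sa)^2 = (1-u)*qa^2 + u* sa^2 - u*(1-u)*(qa-sa)^2"
    by (simp add: power2_eq_square algebra_simps)
  have "(1-u)*(pa^2+qa^2) + u*(ra^2+sa^2) \<le> (1-u)*1 + u*1"
    using assms by (intro add_mono mult_left_mono) auto
  hence "u*(1-u)*((pa-ra)^2 + (qa-sa)^2) \<le> 0"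
    using assms(5) e1 e2 by (simp add: algebra_simps)
  moreover have "u*(1-u) > 0" using assms by simp
  ultimately have "(pa-ra)^2 + (qa-sa)^2 \<le> 0"
    using assms(3,4) by (simp add: mult_le_0_iff)
  hence "(pa-ra)^2 = 0" "(qa-sa)^2 = 0"
    using zero_le_power2[of "pa-ra"] zero_le_power2[of "qa-sa"] by linarith+
  thus ?thesis by simp
qed

lemma perturb:
  fixes x :: "real ^ 'n::finite" and idx :: "nat \<Rightarrow> 'n"
  assumes N: "N = CARD('n)" "N \<ge> 2" and bij: "bij_betw idx {1..N} UNIV"
    and xK: "x \<in> Kset N idx" and k: "k \<in> {1..N}"
    and strict: "\<And>i. i \<in> {1..N-1} \<Longrightarrow> (i = k \<or> i+1 = k) \<Longrightarrow>
        (x $ idx i)^2 + (x $ idx (i+1))^2 < 1"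
  shows "\<not> x extreme_point_of Kset N idx"
proof
  assume ext: "x extreme_point_of Kset N idx"
  define c where "c i = (if i \<in> {1..N-1} then (x $ idx i)^2 + (x $ idx (i+1))^2 else 0)" for i
  have c1: "c (k-1) < 1"
  proof (cases "k-1 \<in> {1..N-1}")
    case True
    hence "Suc (k-1) = k" by auto
    thus ?thesis using strict[of "k-1"] True unfolding c_def by auto
  next
    case False
    have "c (k-1) = 0" unfolding c_def by (rule if_not_P[OF False])
    thus ?thesis by simp
  qed
  have c2: "c k < 1"
    using strict k unfolding c_def by auto
  define m where "m = max (c (k-1)) (c k)"
  have m1: "m < 1" using c1 c2 unfolding m_def by simp
  define e where "e = (1 - m)/4"
  have e0: "e > 0" using m1 unfolding e_def by simp
  have cnn: "c i \<ge> 0" for i unfolding c_def by auto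
  have e1: "e \<le> 1/4" using cnn[of k] unfolding e_def m_def by simp
  have inj: "inj_on idx {1..N}" using bij bij_betw_def by blast
  define v :: "real ^ 'n" where "v = e *\<^sub>R axis (idx k) 1"
  have vne: "v \<noteq> 0" using e0 unfolding v_def by (simp add: axis_eq_0_iff)
  have inK: "x + s *\<^sub>R v \<in> Kset N idx" if s: "s = 1 \<or> s = -1" for s
    unfolding Kset_def
  proof (intro CollectI ballI)
    fix i assume i: "i \<in> {1..N-1}"
    have xi: "(x $ idx i)^2 + (x $ idx (i+1))^2 \<le> 1" using xK i unfolding Kset_def by auto
    have vi: "v $ j = (if j = idx k then e else 0)" for j
      unfolding v_def by (simp add: axis_def)
    show "((x + s *\<^sub>R v) $ idx i)^2 + ((x + s *\<^sub>R v) $ idx (i+1))^2 \<le> 1"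
    proof (cases "i = k \<or> i+1 = k")
      case False
      have "idx i \<noteq> idx k" "idx (i+1) \<noteq> idx k"
        using False inj i k N by (auto dest: inj_onD)
      thus ?thesis using xi by (simp add: vi)
    next
      case True
      have cik: "c i \<le> m" using True unfolding m_def by auto
      have cival: "c i = (x $ idx i)^2 + (x $ idx (i+1))^2" using i unfolding c_def by simp
      have ne: "idx i \<noteq> idx (i+1)" using inj i N by (auto dest: inj_onD)
      have s2: "s^2 = 1" "\<bar>s\<bar> = 1" using s by auto
      show ?thesis
      proof (cases "i = k")
        case True
        have neq: "idx (i+1) \<noteq> idx k" using True ne by simp
        let ?a = "x $ idx i" and ?b = "x $ idx (i+1)"
        have "?a^2 \<le> 1" using xi zero_le_power2[of "?b"] by linarith
        hence a1: "\<bar>?a\<bar> \<le> 1" by (simp add: abs_square_le_1)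
        have "(?a + s*e)^2 = ?a^2 + 2* s*e*?a + s^2*e^2" by (simp add: power2_eq_square algebra_simps)
        also have "\<dots> \<le> ?a^2 + 2*e + e^2"
        proof -
          have "s*e*?a \<le> \<bar>s*e*?a\<bar>" by simp
          also have "\<dots> = e*\<bar>?a\<bar>" using s2 e0 by (simp add: abs_mult)
          also have "\<dots> \<le> e" using a1 e0 by (simp add: mult_left_le)
          finally show ?thesis using s2 by simp
        qed
        finally have "(?a + s*e)^2 \<le> ?a^2 + 2*e + e^2" .
        moreover have "e^2 \<le> e" using e0 e1 by (simp add: power2_eq_square mult_left_le)
        ultimately have "(?a + s*e)^2 + ?b^2 \<le> c i + 3*e" using cival by simp
        also have "\<dots> < 1" using cik e_def m1 by simp
        finally show ?thesis using True neq by (simp add: vi)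
      next
        case False
        hence T: "i+1 = k" using True by simp
        have neq: "idx i \<noteq> idx k" using T ne by simp
        let ?a = "x $ idx (i+1)" and ?b = "x $ idx i"
        have "?a^2 \<le> 1" using xi zero_le_power2[of "?b"] by linarith
        hence a1: "\<bar>?a\<bar> \<le> 1" by (simp add: abs_square_le_1)
        have "(?a + s*e)^2 = ?a^2 + 2* s*e*?a + s^2*e^2" by (simp add: power2_eq_square algebra_simps)
        also have "\<dots> \<le> ?a^2 + 2*e + e^2"
        proof -
          have "s*e*?a \<le> \<bar>s*e*?a\<bar>" by simp
          also have "\<dots> = e*\<bar>?a\<bar>" using s2 e0 by (simp add: abs_mult)
          also have "\<dots> \<le> e" using a1 e0 by (simp add: mult_left_le)
          finally show ?thesis using s2 by simp
        qed
        finally have "(?a + s*e)^2 \<le> ?a^2 + 2*e + e^2" .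
        moreover have "e^2 \<le> e" using e0 e1 by (simp add: power2_eq_square mult_left_le)
        ultimately have "?b^2 + (?a + s*e)^2 \<le> c i + 3*e" using cival by simp
        also have "\<dots> < 1" using cik e_def m1 by simp
        finally show ?thesis using T neq by (simp add: vi)
      qed
    qed
  qed
  have A: "x + (-1) *\<^sub>R v \<in> Kset N idx" by (rule inK) simp
  have B: "x + 1 *\<^sub>R v \<in> Kset N idx" by (rule inK) simp
  have ne: "x + (-1) *\<^sub>R v \<noteq> x + 1 *\<^sub>R v"
  proof
    assume "x + (-1) *\<^sub>R v = x + 1 *\<^sub>R v"
    hence "(x + 1 *\<^sub>R v) - (x + (-1) *\<^sub>R v) = 0" by simp
    hence "2 *\<^sub>R v = 0" by (simp add: scaleR_2)
    thus False using vne by simp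
  qed
  have mid: "midpoint (x + (-1) *\<^sub>R v) (x + 1 *\<^sub>R v) = x"
  proof -
    have "(x + (-1) *\<^sub>R v) + (x + 1 *\<^sub>R v) = x + x" by simp
    thus ?thesis unfolding midpoint_def by (simp add: scaleR_half_double)
  qed
  have "x \<in> open_segment (x + (-1) *\<^sub>R v) (x + 1 *\<^sub>R v)"
    using midpoint_in_open_segment[of "x + (-1) *\<^sub>R v" "x + 1 *\<^sub>R v"] ne mid by (simp only: simp_thms)
  thus False using ext A B unfolding extreme_point_of_def by blast
qed

theorem mainTheorem6:
  fixes N :: nat and idx :: "nat \<Rightarrow> 'n::finite"
  assumes "N = CARD('n)" and "N \<ge> 2" and "bij_betw idx {1..N} UNIV"
  shows "{x. x extreme_point_of Kset N idx} =
         (\<Union>I\<in>admissible_index_sets N. KIset N idx I)"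
proof (intro equalityI subsetI)
  fix x assume "x \<in> {x. x extreme_point_of Kset N idx}"
  hence ext: "x extreme_point_of Kset N idx" by simp
  hence xK: "x \<in> Kset N idx" unfolding extreme_point_of_def by simp
  define I where "I = {i\<in>{1..N-1}. (x $ idx i)^2 + (x $ idx (i+1))^2 < 1}"
  have no1: "1 \<notin> I"
  proof
    assume "1 \<in> I"
    hence "\<not> x extreme_point_of Kset N idx"
      using assms xK by (intro perturb[where k=1]) (auto simp: I_def)
    thus False using ext by simp
  qed
  have noN: "N-1 \<notin> I"
  proof
    assume NI: "N-1 \<in> I"
    have "\<not> x extreme_point_of Kset N idx"
    proof (rule perturb[where k=N, OF assms xK])
      show "N \<in> {1..N}" using assms by auto
      fix i assume i: "i \<in> {1..N-1}" "i = N \<or> i+1 = N"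
      hence "i = N-1" by auto
      thus "(x $ idx i)^2 + (x $ idx (i+1))^2 < 1" using NI assms unfolding I_def by auto
    qed
    thus False using ext by simp
  qed
  have cons: "i+1 \<notin> I" if "i \<in> I" for i
  proof
    assume "i+1 \<in> I"
    hence "\<not> x extreme_point_of Kset N idx"
      using assms xK that by (intro perturb[where k="i+1"]) (auto simp: I_def)
    thus False using ext by simp
  qed
  have "I \<subseteq> {2..N-2}"
  proof
    fix i assume "i \<in> I"
    moreover hence "i \<noteq> 1" "i \<noteq> N-1" using no1 noN by auto
    ultimately show "i \<in> {2..N-2}" unfolding I_def by auto
  qed
  hence "I \<in> admissible_index_sets N" using cons unfolding admissible_index_sets_def by auto
  moreover have "x \<in> KIset N idx I"
    using xK unfolding KIset_def I_def Kset_def by force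
  ultimately show "x \<in> (\<Union>I\<in>admissible_index_sets N. KIset N idx I)" by blast
next
  fix x assume "x \<in> (\<Union>I\<in>admissible_index_sets N. KIset N idx I)"
  then obtain I where I: "I \<in> admissible_index_sets N" and xI: "x \<in> KIset N idx I" by blast
  have xK: "x \<in> Kset N idx" using xI unfolding KIset_def by simp
  have tight: "(x $ idx i)^2 + (x $ idx (i+1))^2 = 1" if "i \<in> {1..N-1}" "i \<notin> I" for i
    using xI that unfolding KIset_def by auto
  have Isub: "I \<subseteq> {2..N-2}" and Icons: "\<And>i. i \<in> I \<Longrightarrow> i+1 \<notin> I"
    using I unfolding admissible_index_sets_def by auto
  have "x extreme_point_of Kset N idx"
    unfolding extreme_point_of_def
  proof (intro conjI ballI xK notI)
    fix a b assume aK: "a \<in> Kset N idx" and bK: "b \<in> Kset N idx"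
      and xs: "x \<in> open_segment a b"
    then obtain u where ab: "a \<noteq> b" and u: "0 < u" "u < 1"
      and xu: "x = (1 - u) *\<^sub>R a + u *\<^sub>R b" unfolding in_segment by blast
    have eq: "a $ idx i = b $ idx i \<and> a $ idx (i+1) = b $ idx (i+1)"
      if i: "i \<in> {1..N-1}" "i \<notin> I" for i
    proof (rule pair_tight[OF _ _ u])
      show "(a $ idx i)\<^sup>2 + (a $ idx (i + 1))\<^sup>2 \<le> 1" using aK i unfolding Kset_def by auto
      show "(b $ idx i)\<^sup>2 + (b $ idx (i + 1))\<^sup>2 \<le> 1" using bK i unfolding Kset_def by auto
      show "((1 - u) * a $ idx i + u * b $ idx i)\<^sup>2 +
        ((1 - u) * a $ idx (i + 1) + u * b $ idx (i + 1))\<^sup>2 = 1"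
        using tight[OF i] unfolding xu by simp
    qed
    have "a $ j = b $ j" for j
    proof -
      have "j \<in> idx ` {1..N}" using assms(3) unfolding bij_betw_def by auto
      then obtain k where k: "k \<in> {1..N}" "j = idx k" by blast
      show ?thesis
      proof (cases "k = 1")
        case True
        thus ?thesis using eq[of 1] k assms Isub by force
      next
        case False
        hence k2: "k \<ge> 2" using k by auto
        show ?thesis
        proof (cases "k-1 \<in> I")
          case False
          have km: "k-1 \<in> {1..N-1}" "k-1+1 = k" using k k2 by auto
          have "a $ idx k = b $ idx k" using eq[OF km(1) False] km(2) by metis
          thus ?thesis using k(2) by simp
        next
          case True
          hence "k \<notin> I" using Icons[of "k-1"] k2 by auto
          moreover have "k-1 \<le> N-2" using True Isub by auto
          hence "k \<le> N-1" using k2 by linarith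
          ultimately show ?thesis using eq[of k] k k2 by auto
        qed
      qed
    qed
    hence "a = b" by (simp add: vec_eq_iff)
    thus False using ab by simp
  qed
  thus "x \<in> {x. x extreme_point_of Kset N idx}" by simp
qed

end
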